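(* Let $N\ge 2$ and let $D_{2N}=\langle r,s : r^N=s^2=1,\ srs=r^{-1}\rangle$ be the dihedral group of order $2N$. Then $D_{2N}$ is $R_4$ if and only if $N\equiv 2 \pmod 4$.
   Context: For a finite group $G$, $\overline{G}=G\cup\{\infty\}$, and $K_V$ denotes the complete graph on vertex set $V$. $G$ acts on $\overline{G}$ by right multiplication, with $\infty g=\infty$ for all $g\in G$; for a subgraph $F$ of $K_{\overline{G}}$ and $g\in G$, $Fg$ is the graph obtained by replacing every vertex $v$ by $vg$. A $k$-factor of $K_V$ is a spanning $k$-regular subgraph, and a $k$-factorization is a set of $k$-factors whose edge sets partition the edge set of $K_V$. A $k$-factorization $\mathcal{F}$ of $K_{\overline{G}}$ is $1$-rotational if $Fg\in\mathcal{F}$ for all $F\in\mathcal{F}$ and $g\in G$. A finite group $G$ is called $R_k$ if there exists a $1$-rotational $k$-factorization of $K_{\overline{G}}$. *)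

theory Defs
  imports "HOL-Algebra.Group"
begin

text \<open>A (simple) graph on a vertex set V is represented by its edge set; an edge is a
two-element subset of V. The complete graph K_V has all two-element subsets as edges.\<close>

definition complete_edges :: "'v set \<Rightarrow> 'v set set" where
  "complete_edges V = {{u, v} | u v. u \<in> V \<and> v \<in> V \<and> u \<noteq> v}"

definition k_factor :: "'v set \<Rightarrow> nat \<Rightarrow> 'v set set \<Rightarrow> bool" where
  "k_factor V k F \<longleftrightarrow> F \<subseteq> complete_edges V \<and> (\<forall>v\<in>V. card {e \<in> F. v \<in> e} = k)"

definition k_factorization :: "'v set \<Rightarrow> nat \<Rightarrow> 'v set set set \<Rightarrow> bool" where
  "k_factorization V k FF \<longleftrightarrow>
     (\<forall>F\<in>FF. k_factor V k F) \<and> (\<forall>e\<in>complete_edges V. \<exists>!F. F \<in> FF \<and> e \<in> F)"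

text \<open>The point \<infinity> is represented by None, group elements g by Some g.\<close>

definition Gbar :: "('a, 'b) monoid_scheme \<Rightarrow> 'a option set" where
  "Gbar G = Some ` carrier G \<union> {None}"

definition ract :: "('a, 'b) monoid_scheme \<Rightarrow> 'a \<Rightarrow> 'a option \<Rightarrow> 'a option" where
  "ract G g v = map_option (\<lambda>x. x \<otimes>\<^bsub>G\<^esub> g) v"

definition graph_translate :: "('a, 'b) monoid_scheme \<Rightarrow> 'a option set set \<Rightarrow> 'a \<Rightarrow> 'a option set set" where
  "graph_translate G F g = (\<lambda>e. ract G g ` e) ` F"

definition one_rotational :: "('a, 'b) monoid_scheme \<Rightarrow> nat \<Rightarrow> 'a option set set set \<Rightarrow> bool" where
  "one_rotational G k FF \<longleftrightarrow> k_factorization (Gbar G) k FF \<and>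
     (\<forall>F\<in>FF. \<forall>g\<in>carrier G. graph_translate G F g \<in> FF)"

definition is_R :: "('a, 'b) monoid_scheme \<Rightarrow> nat \<Rightarrow> bool" where
  "is_R G k \<longleftrightarrow> (\<exists>FF. one_rotational G k FF)"

text \<open>Element (i, b) stands for r^i s^b (0 \<le> i < N, b = True meaning s^1).
Using s r^j = r^(-j) s:  r^i s^a r^j s^b = r^(i \<plusminus> j) s^(a+b).\<close>

definition dihedral :: "nat \<Rightarrow> (nat \<times> bool) monoid" where
  "dihedral N = \<lparr> carrier = {..<N} \<times> UNIV,
     mult = (\<lambda>(i, a) (j, b). (if a then (i + N - j) mod N else (i + j) mod N, a \<noteq> b)),
     one = (0, False) \<rparr>"

end

theory Submission
  imports Defs
begin


lemma dmult: "(i,a) \<otimes>\<^bsub>dihedral N\<^esub> (j,b) = (if a then (i+N-j) mod N else (i+j) mod N, a \<noteq> b)"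
  by (simp add: dihedral_def)

lemma dcarrier: "carrier (dihedral N) = {..<N} \<times> UNIV"
  by (simp add: dihedral_def)

lemma d_one: "\<one>\<^bsub>dihedral N\<^esub> = (0, False)"
  by (simp add: dihedral_def)

lemma fst_mult_int:
  assumes "j < N"
  shows "int (fst ((i,a) \<otimes>\<^bsub>dihedral N\<^esub> (j,b))) = (int i + (if a then - int j else int j)) mod int N"
proof -
  have "int (i+N-j) = (int i - int j) + int N" using assms by simp
  then have "int ((i + N - j) mod N) = ((int i - int j) + int N) mod int N"
    by (simp add: of_nat_mod)
  then have "int ((i + N - j) mod N) = (int i - int j) mod int N" by simp
  then show ?thesis using assms by (simp add: dmult zmod_int)
qed

definition eps :: "bool \<Rightarrow> int" where "eps b = (if b then -1 else 1)"

lemma eps_sq: "eps a * eps a = 1" by (simp add: eps_def)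
lemma eps_ne: "eps (a \<noteq> b) = eps a * eps b" by (simp add: eps_def)

lemma fst_mult_eps:
  assumes "j < N"
  shows "int (fst ((i,a) \<otimes>\<^bsub>dihedral N\<^esub> (j,b))) = (int i + eps a * int j) mod int N"
  using fst_mult_int[OF assms] by (simp add: eps_def)

lemma dgroup: assumes "N \<ge> 1" shows "group (dihedral N)"
proof (rule groupI)
  fix x y assume "x \<in> carrier (dihedral N)" "y \<in> carrier (dihedral N)"
  then show "x \<otimes>\<^bsub>dihedral N\<^esub> y \<in> carrier (dihedral N)"
    using assms by (cases x; cases y) (auto simp: dmult dcarrier)
next
  show "\<one>\<^bsub>dihedral N\<^esub> \<in> carrier (dihedral N)" using assms by (simp add: d_one dcarrier)
next
  fix x y z assume xyz: "x \<in> carrier (dihedral N)" "y \<in> carrier (dihedral N)" "z \<in> carrier (dihedral N)"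
  obtain i a where x: "x = (i,a)" by (cases x)
  obtain j b where y: "y = (j,b)" by (cases y)
  obtain k c where z: "z = (k,c)" by (cases z)
  have ijk: "i < N" "j < N" "k < N" using xyz x y z by (auto simp: dcarrier)
  obtain u where u: "(i,a) \<otimes>\<^bsub>dihedral N\<^esub> (j,b) = (u, a\<noteq>b)" by (simp add: dmult)
  obtain v where v: "(j,b) \<otimes>\<^bsub>dihedral N\<^esub> (k,c) = (v, b\<noteq>c)" by (simp add: dmult)
  have N0: "0 < N" using ijk by simp
  have v': "v < N" using v N0 by (cases b) (auto simp: dmult)
  have iu: "int u = (int i + eps a * int j) mod int N" using fst_mult_eps[OF ijk(2), of i a b] u by simp
  have iv: "int v = (int j + eps b * int k) mod int N" using fst_mult_eps[OF ijk(3), of j b c] v by simp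
  have "int (fst ((u, a\<noteq>b) \<otimes>\<^bsub>dihedral N\<^esub> (k,c))) = (int u + eps (a\<noteq>b) * int k) mod int N"
    by (rule fst_mult_eps[OF ijk(3)])
  also have "\<dots> = ((int i + eps a * int j) mod int N + eps a * eps b * int k) mod int N"
    by (simp only: iu eps_ne)
  also have "\<dots> = (int i + eps a * int j + eps a * eps b * int k) mod int N"
    by (rule mod_add_left_eq)
  finally have L: "int (fst ((u, a\<noteq>b) \<otimes>\<^bsub>dihedral N\<^esub> (k,c))) = (int i + eps a * int j + eps a * eps b * int k) mod int N" .
  have "int (fst ((i,a) \<otimes>\<^bsub>dihedral N\<^esub> (v, b\<noteq>c))) = (int i + eps a * int v) mod int N"
    by (rule fst_mult_eps[OF v'])
  also have "\<dots> = (int i + eps a * ((int j + eps b * int k) mod int N)) mod int N"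
    by (simp add: iv)
  also have "\<dots> = (int i + eps a * (int j + eps b * int k)) mod int N"
    by (metis mod_add_right_eq mod_mult_right_eq)
  finally have R: "int (fst ((i,a) \<otimes>\<^bsub>dihedral N\<^esub> (v, b\<noteq>c))) = (int i + eps a * int j + eps a * eps b * int k) mod int N"
    by (simp add: algebra_simps)
  have "fst ((u, a\<noteq>b) \<otimes>\<^bsub>dihedral N\<^esub> (k,c)) = fst ((i,a) \<otimes>\<^bsub>dihedral N\<^esub> (v, b\<noteq>c))" using L R by simp
  moreover have "snd ((u, a\<noteq>b) \<otimes>\<^bsub>dihedral N\<^esub> (k,c)) = snd ((i,a) \<otimes>\<^bsub>dihedral N\<^esub> (v, b\<noteq>c))" by (simp add: dmult) blast
  ultimately have "(u, a\<noteq>b) \<otimes>\<^bsub>dihedral N\<^esub> (k,c) = (i,a) \<otimes>\<^bsub>dihedral N\<^esub> (v, b\<noteq>c)" by (rule prod_eqI)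
  then show "x \<otimes>\<^bsub>dihedral N\<^esub> y \<otimes>\<^bsub>dihedral N\<^esub> z = x \<otimes>\<^bsub>dihedral N\<^esub> (y \<otimes>\<^bsub>dihedral N\<^esub> z)"
    using x y z u v by simp
next
  fix x assume "x \<in> carrier (dihedral N)"
  then show "\<one>\<^bsub>dihedral N\<^esub> \<otimes>\<^bsub>dihedral N\<^esub> x = x"
    by (cases x) (auto simp: dmult dcarrier d_one)
next
  fix x assume x: "x \<in> carrier (dihedral N)"
  obtain i a where xi: "x = (i,a)" by (cases x)
  have iN: "i < N" using x xi by (simp add: dcarrier)
  show "\<exists>y\<in>carrier (dihedral N). y \<otimes>\<^bsub>dihedral N\<^esub> x = \<one>\<^bsub>dihedral N\<^esub>"
  proof (cases a)
    case True
    then show ?thesis using xi iN by (intro bexI[of _ "(i,True)"]) (auto simp: dmult dcarrier d_one)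
  next
    case False
    have "((N-i) mod N + i) mod N = 0"
    proof (cases "i = 0")
      case True then show ?thesis by simp
    next
      case False then have "(N-i) mod N = N - i" using iN by simp
      then show ?thesis using iN by simp
    qed
    then show ?thesis using xi iN assms False
      by (intro bexI[of _ "((N-i) mod N,False)"]) (auto simp: dmult dcarrier d_one)
  qed
qed

lemma ce_iff: "{u,v} \<in> complete_edges V \<longleftrightarrow> u \<in> V \<and> v \<in> V \<and> u \<noteq> v"
  unfolding complete_edges_def by (auto simp: doubleton_eq_iff)

lemma ce_elim: assumes "e \<in> complete_edges V"
  obtains u v where "e = {u,v}" "u \<in> V" "v \<in> V" "u \<noteq> v"
  using assms unfolding complete_edges_def by blast

lemma kf_unique: assumes "k_factorization V k FF" "F \<in> FF" "F' \<in> FF" "e \<in> complete_edges V" "e \<in> F" "e \<in> F'"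
  shows "F = F'"
  using assms unfolding k_factorization_def by blast

lemma ract_None[simp]: "ract G g None = None" by (simp add: ract_def)
lemma ract_Some[simp]: "ract G g (Some x) = Some (x \<otimes>\<^bsub>G\<^esub> g)" by (simp add: ract_def)

lemma gt_mem: "e \<in> F \<Longrightarrow> ract G g ` e \<in> graph_translate G F g"
  by (simp add: graph_translate_def)

lemma finite_Gbar: "finite (carrier G) \<Longrightarrow> finite (Gbar G)" by (simp add: Gbar_def)

lemma S_card:
  assumes "k_factor (Gbar G) k F"
  shows "card {x \<in> carrier G. {None, Some x} \<in> F} = k"
proof -
  have l: "\<exists>x\<in>carrier G. e = {None, Some x}" if e: "e \<in> F" "None \<in> e" for e
  proof -
    have "e \<in> complete_edges (Gbar G)" using assms e by (auto simp: k_factor_def)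
    then obtain u v where uv: "e = {u,v}" "u \<in> Gbar G" "v \<in> Gbar G" "u \<noteq> v" by (rule ce_elim)
    then show ?thesis using e by (auto simp: Gbar_def insert_commute)
  qed
  have eq: "{e \<in> F. None \<in> e} = (\<lambda>x. {None, Some x}) ` {x \<in> carrier G. {None, Some x} \<in> F}"
    using l by auto
  have "inj_on (\<lambda>x. {None, Some x}) {x \<in> carrier G. {None, Some x} \<in> F}"
    by (auto simp: inj_on_def doubleton_eq_iff)
  then have "card {x \<in> carrier G. {None, Some x} \<in> F} = card {e \<in> F. None \<in> e}"
    by (simp add: eq card_image)
  also have "\<dots> = k" using assms by (auto simp: k_factor_def Gbar_def)
  finally show ?thesis .
qed

lemma count_factors:
  assumes "k_factorization (Gbar G) k FF" "finite (carrier G)"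
  shows "card (carrier G) = k * card FF"
proof -
  let ?S = "\<lambda>F. {x \<in> carrier G. {None, Some x} \<in> F}"
  have fin: "finite FF"
  proof (rule finite_subset)
    show "FF \<subseteq> Pow (complete_edges (Gbar G))" using assms(1)
      by (auto simp: k_factorization_def k_factor_def)
    have "complete_edges (Gbar G) \<subseteq> Pow (Gbar G)" unfolding complete_edges_def by auto
    then show "finite (Pow (complete_edges (Gbar G)))"
      using finite_Gbar[OF assms(2)] by (meson finite_Pow_iff finite_subset)
  qed
  have un1: "x \<in> (\<Union>F\<in>FF. ?S F)" if x: "x \<in> carrier G" for x
  proof -
    have "{None, Some x} \<in> complete_edges (Gbar G)" using x by (simp add: ce_iff Gbar_def)
    then obtain F where "F \<in> FF" "{None, Some x} \<in> F" using assms(1) unfolding k_factorization_def by blast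
    then show "x \<in> (\<Union>F\<in>FF. ?S F)" using x by blast
  qed
  have un: "carrier G = (\<Union>F\<in>FF. ?S F)" using un1 by blast
  have "card (\<Union>F\<in>FF. ?S F) = (\<Sum>F\<in>FF. card (?S F))"
  proof (rule card_UN_disjoint[OF fin])
    show "\<forall>F\<in>FF. finite (?S F)" using assms(2) by auto
    show "\<forall>F\<in>FF. \<forall>F'\<in>FF. F \<noteq> F' \<longrightarrow> ?S F \<inter> ?S F' = {}"
    proof (intro ballI impI)
      fix F F' assume FF: "F \<in> FF" "F' \<in> FF" "F \<noteq> F'"
      show "?S F \<inter> ?S F' = {}"
      proof (rule ccontr)
        assume "?S F \<inter> ?S F' \<noteq> {}"
        then obtain x where x: "x \<in> carrier G" "{None, Some x} \<in> F" "{None, Some x} \<in> F'" by blast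
        then have "{None, Some x} \<in> complete_edges (Gbar G)" by (simp add: ce_iff Gbar_def)
        then show False using kf_unique[OF assms(1) FF(1,2) _ x(2,3)] FF(3) by blast
      qed
    qed
  qed
  also have "\<dots> = (\<Sum>F\<in>FF. k)"
    by (rule sum.cong[OF refl]) (use assms(1) S_card in \<open>auto simp: k_factorization_def\<close>)
  finally show ?thesis using un by simp
qed

context group begin

lemma ract_comp: "v \<in> Gbar G \<Longrightarrow> a \<in> carrier G \<Longrightarrow> b \<in> carrier G \<Longrightarrow>
   ract G b (ract G a v) = ract G (a \<otimes> b) v"
  by (cases v) (auto simp: Gbar_def m_assoc)

lemma gt_comp:
  assumes "F \<subseteq> complete_edges (Gbar G)" "a \<in> carrier G" "b \<in> carrier G"
  shows "graph_translate G (graph_translate G F a) b = graph_translate G F (a \<otimes> b)"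
proof -
  have "\<And>e. e \<in> F \<Longrightarrow> ract G b ` ract G a ` e = ract G (a \<otimes> b) ` e"
  proof -
    fix e assume "e \<in> F"
    then have "e \<subseteq> Gbar G" using assms(1) unfolding complete_edges_def by auto
    then show "ract G b ` ract G a ` e = ract G (a \<otimes> b) ` e"
      using ract_comp assms(2,3) by (auto simp: image_image intro!: image_cong) 
  qed
  then show ?thesis unfolding graph_translate_def image_image by (auto intro!: image_cong)
qed

lemma cancel_r: "x \<in> carrier G \<Longrightarrow> y \<in> carrier G \<Longrightarrow> x \<otimes> y \<otimes> inv y = x"
  by (simp add: m_assoc)

lemma stab_structure:
  assumes R: "one_rotational G k FF" and k: "0 < k"
  obtains F0 where "F0 \<in> FF" "{None, Some \<one>} \<in> F0" "card {x\<in>carrier G. {None, Some x} \<in> F0} = k"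
    "\<And>g. g \<in> carrier G \<Longrightarrow> graph_translate G F0 g = F0 \<Longrightarrow> {None, Some g} \<in> F0"
    "\<And>a b. a \<in> carrier G \<Longrightarrow> b \<in> carrier G \<Longrightarrow> graph_translate G F0 a = F0 \<Longrightarrow>
        graph_translate G F0 b = F0 \<Longrightarrow> graph_translate G F0 (a \<otimes> b) = F0"
    "\<And>d. d \<in> carrier G \<Longrightarrow> d \<noteq> \<one> \<Longrightarrow> d \<otimes> d = \<one> \<Longrightarrow>
        \<exists>p\<in>carrier G. graph_translate G F0 (inv p \<otimes> d \<otimes> p) = F0"
proof -
  have KF: "k_factorization (Gbar G) k FF" and rot: "\<And>F g. F \<in> FF \<Longrightarrow> g \<in> carrier G \<Longrightarrow> graph_translate G F g \<in> FF"
    using R by (auto simp: one_rotational_def)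
  have fac: "\<And>F. F \<in> FF \<Longrightarrow> k_factor (Gbar G) k F" using KF by (simp add: k_factorization_def)
  have sub: "\<And>F. F \<in> FF \<Longrightarrow> F \<subseteq> complete_edges (Gbar G)" using fac by (simp add: k_factor_def)
  have e1: "{None, Some \<one>} \<in> complete_edges (Gbar G)" by (simp add: ce_iff Gbar_def)
  then obtain F0 where F0: "F0 \<in> FF" "{None, Some \<one>} \<in> F0" using KF unfolding k_factorization_def by blast
  have tr1: "\<And>g. g \<in> carrier G \<Longrightarrow> {None, Some g} \<in> graph_translate G F0 g"
  proof -
    fix g assume g: "g \<in> carrier G"
    have "ract G g ` {None, Some \<one>} \<in> graph_translate G F0 g" using F0(2) by (rule gt_mem)
    then show "{None, Some g} \<in> graph_translate G F0 g" using g by simp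
  qed
  show ?thesis
  proof (rule that[OF F0(1) F0(2)])
    show "card {x\<in>carrier G. {None, Some x} \<in> F0} = k" using fac[OF F0(1)] by (rule S_card)
  next
    fix g assume "g \<in> carrier G" "graph_translate G F0 g = F0"
    then show "{None, Some g} \<in> F0" using tr1 by metis
  next
    fix a b assume ab: "a \<in> carrier G" "b \<in> carrier G" "graph_translate G F0 a = F0" "graph_translate G F0 b = F0"
    then show "graph_translate G F0 (a \<otimes> b) = F0" using gt_comp[OF sub[OF F0(1)] ab(1,2)] by simp
  next
    fix d assume d: "d \<in> carrier G" "d \<noteq> \<one>" "d \<otimes> d = \<one>"
    have ed: "{Some \<one>, Some d} \<in> complete_edges (Gbar G)" using d by (simp add: ce_iff Gbar_def)
    then obtain F where F: "F \<in> FF" "{Some \<one>, Some d} \<in> F" using KF unfolding k_factorization_def by blast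
    have "card {x\<in>carrier G. {None, Some x} \<in> F} = k" using fac[OF F(1)] by (rule S_card)
    then have "{x\<in>carrier G. {None, Some x} \<in> F} \<noteq> {}" using k by (metis card.empty less_irrefl)
    then obtain g where g: "g \<in> carrier G" "{None, Some g} \<in> F" by blast
    have "{None, Some g} \<in> complete_edges (Gbar G)" using g by (simp add: ce_iff Gbar_def)
    then have FF0: "F = graph_translate G F0 g"
      using kf_unique[OF KF F(1) rot[OF F0(1) g(1)] _ g(2) tr1[OF g(1)]] by blast
    then obtain e' where e': "e' \<in> F0" "ract G g ` e' = {Some \<one>, Some d}"
      using F(2) unfolding graph_translate_def by auto
    obtain u v where uv: "e' = {u,v}" "u \<in> Gbar G" "v \<in> Gbar G" "u \<noteq> v"
      using sub[OF F0(1)] e'(1) by (blast elim: ce_elim)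
    have nn: "None \<notin> ract G g ` e'" using e'(2) by auto
    have "u \<noteq> None" "v \<noteq> None" using nn uv(1) by (metis imageI insertCI ract_None)+
    then obtain p' q' where pq': "u = Some p'" "v = Some q'" by auto
    have pq'c: "p' \<in> carrier G" "q' \<in> carrier G" using uv pq' by (auto simp: Gbar_def)
    have "{Some (p' \<otimes> g), Some (q' \<otimes> g)} = {Some \<one>, Some d}" using e'(2) uv(1) pq' by simp
    then have "(p' \<otimes> g = \<one> \<and> q' \<otimes> g = d) \<or> (q' \<otimes> g = \<one> \<and> p' \<otimes> g = d)"
      by (auto simp: doubleton_eq_iff)
    then have "\<exists>p q. p \<in> carrier G \<and> q \<in> carrier G \<and> {Some p, Some q} \<in> F0 \<and> p \<otimes> g = \<one> \<and> q \<otimes> g = d"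
    proof
      assume "p' \<otimes> g = \<one> \<and> q' \<otimes> g = d"
      moreover have "{Some p', Some q'} \<in> F0" using e'(1) uv(1) pq' by simp
      ultimately show ?thesis using pq'c by blast
    next
      assume "q' \<otimes> g = \<one> \<and> p' \<otimes> g = d"
      moreover have "{Some q', Some p'} \<in> F0" using e'(1) uv(1) pq' by (simp add: insert_commute)
      ultimately show ?thesis using pq'c by blast
    qed
    then obtain p q where pq: "p \<in> carrier G" "q \<in> carrier G" "{Some p, Some q} \<in> F0" "p \<otimes> g = \<one>" "q \<otimes> g = d"
      by blast
    have pinv: "inv g = p" using pq(1,4) g(1) by (simp add: inv_equality)
    have qdp: "q = d \<otimes> p"
    proof -
      have "q = q \<otimes> g \<otimes> inv g" using pq(2) g(1) by (simp add: cancel_r)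
      then show ?thesis using pq(5) pinv by simp
    qed
    let ?w = "inv p \<otimes> d \<otimes> p"
    have wc: "?w \<in> carrier G" using pq(1) d(1) by simp
    have "p \<otimes> ?w = q" using pq(1) d(1) qdp by (simp add: m_assoc[symmetric])
    moreover have "q \<otimes> ?w = p" using pq(1) d(1,3) qdp by (simp add: m_assoc[symmetric] cancel_r)
    ultimately have "ract G ?w ` {Some p, Some q} = {Some p, Some q}" by auto
    then have in2: "{Some p, Some q} \<in> graph_translate G F0 ?w" using gt_mem[OF pq(3), of G ?w] by simp
    have "p \<noteq> q"
    proof
      assume "p = q" then have "d = \<one>" using pq(4,5) by simp
      then show False using d(2) by simp
    qed
    then have "{Some p, Some q} \<in> complete_edges (Gbar G)" using pq by (simp add: ce_iff Gbar_def)
    then have "graph_translate G F0 ?w = F0" using kf_unique[OF KF rot[OF F0(1) wc] F0(1) _ in2 pq(3)] by blast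
    then show "\<exists>p\<in>carrier G. graph_translate G F0 (inv p \<otimes> d \<otimes> p) = F0" using pq(1) by blast
  qed
qed

end


lemma par_mult: assumes "even N" "j < N"
  shows "fst ((i,a) \<otimes>\<^bsub>dihedral N\<^esub> (j,b)) mod 2 = (i + j) mod 2"
proof -
  have "j \<le> i + N" using assms by simp
  then have "even (i + N - j) \<longleftrightarrow> even (i + N + j)" by (simp add: even_diff_nat)
  then have "even (i + N - j) \<longleftrightarrow> even (i + j)" using assms(1) by simp
  then have "(i + N - j) mod 2 = (i + j) mod 2" by (metis even_iff_mod_2_eq_zero odd_iff_mod_2_eq_one)
  moreover have "(i + j) mod N mod 2 = (i+j) mod 2" "(i + N - j) mod N mod 2 = (i+N-j) mod 2"
    using assms by (simp_all add: mod_mod_cancel)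
  ultimately show ?thesis by (simp add: dmult)
qed

lemma par_conj_aux:
  assumes N: "even N" and pc: "p \<in> carrier (dihedral N)" "c \<in> carrier (dihedral N)" "d \<in> carrier (dihedral N)"
    and eq: "p \<otimes>\<^bsub>dihedral N\<^esub> c = d \<otimes>\<^bsub>dihedral N\<^esub> p"
  shows "fst c mod 2 = fst d mod 2 \<and> snd c = snd d"
proof -
  obtain i a where p: "p = (i,a)" by (cases p)
  obtain j b where c: "c = (j,b)" by (cases c)
  obtain k e where d: "d = (k,e)" by (cases d)
  have lt: "i < N" "j < N" "k < N" using pc p c d by (auto simp: dcarrier)
  have eq': "(i,a) \<otimes>\<^bsub>dihedral N\<^esub> (j,b) = (k,e) \<otimes>\<^bsub>dihedral N\<^esub> (i,a)" using eq p c d by simp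
  have "(i + j) mod 2 = (k + i) mod 2"
    using par_mult[OF N lt(2), of i a b] par_mult[OF N lt(1), of k e a] eq' by simp
  then have j: "j mod 2 = k mod 2" by presburger
  have "(a \<noteq> b) = (e \<noteq> a)" using arg_cong[OF eq', of snd] by (simp add: dmult)
  then have "b = e" by blast
  then show ?thesis using c d j by simp
qed

lemma conj_par:
  assumes N: "even N" "N \<ge> 1" and pc: "p \<in> carrier (dihedral N)" "d \<in> carrier (dihedral N)"
  shows "fst (inv\<^bsub>dihedral N\<^esub> p \<otimes>\<^bsub>dihedral N\<^esub> d \<otimes>\<^bsub>dihedral N\<^esub> p) mod 2 = fst d mod 2 \<and> snd (inv\<^bsub>dihedral N\<^esub> p \<otimes>\<^bsub>dihedral N\<^esub> d \<otimes>\<^bsub>dihedral N\<^esub> p) = snd d"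
proof -
  interpret group "dihedral N" using dgroup N by simp
  have cc: "inv\<^bsub>dihedral N\<^esub> p \<otimes>\<^bsub>dihedral N\<^esub> d \<otimes>\<^bsub>dihedral N\<^esub> p \<in> carrier (dihedral N)" using pc by simp
  have eq: "p \<otimes>\<^bsub>dihedral N\<^esub> (inv\<^bsub>dihedral N\<^esub> p \<otimes>\<^bsub>dihedral N\<^esub> d \<otimes>\<^bsub>dihedral N\<^esub> p) = d \<otimes>\<^bsub>dihedral N\<^esub> p" using pc by (simp add: m_assoc[symmetric])
  show ?thesis by (rule par_conj_aux[OF N(1) pc(1) cc pc(2) eq])
qed

lemma neq_by_key: "fst x mod (2::nat) \<noteq> fst y mod 2 \<or> snd x \<noteq> snd y \<Longrightarrow> x \<noteq> y" by auto

lemma necessity: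
  assumes N2: "N \<ge> 2" and R: "one_rotational (dihedral N) 4 FF"
  shows "N mod 4 = 2"
proof -
  interpret group "dihedral N" using dgroup N2 by simp
  have fin: "finite (carrier (dihedral N))" by (simp add: dcarrier)
  have "card (carrier (dihedral N)) = 4 * card FF"
    using count_factors[OF _ fin] R by (simp add: one_rotational_def)
  moreover have "card (carrier (dihedral N)) = 2 * N" by (simp add: dcarrier card_cartesian_product)
  ultimately have evN: "even N" by presburger
  define m where "m = N div 2"
  have Nm: "N = 2*m" using evN m_def by simp
  show ?thesis
  proof (rule ccontr)
    assume "N mod 4 \<noteq> 2"
    then have evm: "even m" using Nm by presburger
    have m0: "0 < m" "m < N" using Nm N2 by auto
    obtain F0 where F0: "F0 \<in> FF" "{None, Some \<one>\<^bsub>dihedral N\<^esub>} \<in> F0" "card {x\<in>carrier (dihedral N). {None, Some x} \<in> F0} = 4"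
      "\<And>g. g \<in> carrier (dihedral N) \<Longrightarrow> graph_translate (dihedral N) F0 g = F0 \<Longrightarrow> {None, Some g} \<in> F0"
      "\<And>a b. a \<in> carrier (dihedral N) \<Longrightarrow> b \<in> carrier (dihedral N) \<Longrightarrow> graph_translate (dihedral N) F0 a = F0 \<Longrightarrow>
        graph_translate (dihedral N) F0 b = F0 \<Longrightarrow> graph_translate (dihedral N) F0 (a \<otimes>\<^bsub>dihedral N\<^esub> b) = F0"
      "\<And>d. d \<in> carrier (dihedral N) \<Longrightarrow> d \<noteq> \<one>\<^bsub>dihedral N\<^esub> \<Longrightarrow> d \<otimes>\<^bsub>dihedral N\<^esub> d = \<one>\<^bsub>dihedral N\<^esub> \<Longrightarrow>
        \<exists>p\<in>carrier (dihedral N). graph_translate (dihedral N) F0 (inv\<^bsub>dihedral N\<^esub> p \<otimes>\<^bsub>dihedral N\<^esub> d \<otimes>\<^bsub>dihedral N\<^esub> p) = F0"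
      using stab_structure[OF R] by auto
    let ?S = "{x\<in>carrier (dihedral N). {None, Some x} \<in> F0}"
    let ?z = "(m, False)"
    have zc: "?z \<in> carrier (dihedral N)" using m0 by (simp add: dcarrier)
    have zcent: "?z \<otimes>\<^bsub>dihedral N\<^esub> x = x \<otimes>\<^bsub>dihedral N\<^esub> ?z" if "x \<in> carrier (dihedral N)" for x
    proof -
      obtain j b where "x = (j,b)" by (cases x)
      moreover have "j + N - m = j + m" using Nm by simp
      ultimately show ?thesis by (simp add: dmult add.commute)
    qed
    obtain pz where pz: "pz \<in> carrier (dihedral N)" "graph_translate (dihedral N) F0 (inv\<^bsub>dihedral N\<^esub> pz \<otimes>\<^bsub>dihedral N\<^esub> ?z \<otimes>\<^bsub>dihedral N\<^esub> pz) = F0"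
    proof -
      have "m + m = N" using Nm by simp
      then have zz: "?z \<otimes>\<^bsub>dihedral N\<^esub> ?z = \<one>\<^bsub>dihedral N\<^esub>" by (simp add: dmult d_one)
      have "?z \<noteq> \<one>\<^bsub>dihedral N\<^esub>" using m0 by (simp add: d_one)
      then show ?thesis using F0(6)[OF zc _ zz] that by blast
    qed
    have pzz: "pz \<otimes>\<^bsub>dihedral N\<^esub> ?z = ?z \<otimes>\<^bsub>dihedral N\<^esub> pz" using zcent pz(1) by simp
    have "inv\<^bsub>dihedral N\<^esub> pz \<otimes>\<^bsub>dihedral N\<^esub> ?z \<otimes>\<^bsub>dihedral N\<^esub> pz = inv\<^bsub>dihedral N\<^esub> pz \<otimes>\<^bsub>dihedral N\<^esub> (?z \<otimes>\<^bsub>dihedral N\<^esub> pz)" using pz(1) zc by (intro m_assoc) auto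
    also have "\<dots> = inv\<^bsub>dihedral N\<^esub> pz \<otimes>\<^bsub>dihedral N\<^esub> (pz \<otimes>\<^bsub>dihedral N\<^esub> ?z)" using pzz by simp
    also have "\<dots> = (inv\<^bsub>dihedral N\<^esub> pz \<otimes>\<^bsub>dihedral N\<^esub> pz) \<otimes>\<^bsub>dihedral N\<^esub> ?z" using pz(1) zc by (intro m_assoc[symmetric]) auto
    also have "\<dots> = ?z" using pz(1) zc by simp
    finally have zS: "?z \<in> ?S" using pz F0(4) zc by auto
    have sc: "(0, True) \<in> carrier (dihedral N)" using m0 by (simp add: dcarrier)
    obtain pu where pu: "pu \<in> carrier (dihedral N)" "graph_translate (dihedral N) F0 (inv\<^bsub>dihedral N\<^esub> pu \<otimes>\<^bsub>dihedral N\<^esub> (0,True) \<otimes>\<^bsub>dihedral N\<^esub> pu) = F0"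
      using F0(6)[OF sc] by (auto simp: d_one dmult)
    define u where "u = inv\<^bsub>dihedral N\<^esub> pu \<otimes>\<^bsub>dihedral N\<^esub> (0,True) \<otimes>\<^bsub>dihedral N\<^esub> pu"
    have ust: "graph_translate (dihedral N) F0 u = F0" using pu(2) u_def by simp
    have uc: "u \<in> carrier (dihedral N)" using pu sc u_def by simp
    have uk: "fst u mod 2 = 0" "snd u" using conj_par[OF evN _ pu(1) sc] N2 u_def by auto
    have rc: "(1, True) \<in> carrier (dihedral N)" using m0 by (simp add: dcarrier)
    obtain pv where pv: "pv \<in> carrier (dihedral N)" "graph_translate (dihedral N) F0 (inv\<^bsub>dihedral N\<^esub> pv \<otimes>\<^bsub>dihedral N\<^esub> (1,True) \<otimes>\<^bsub>dihedral N\<^esub> pv) = F0"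
      using F0(6)[OF rc] by (auto simp: d_one dmult)
    define v where "v = inv\<^bsub>dihedral N\<^esub> pv \<otimes>\<^bsub>dihedral N\<^esub> (1,True) \<otimes>\<^bsub>dihedral N\<^esub> pv"
    have vst: "graph_translate (dihedral N) F0 v = F0" using pv(2) v_def by simp
    have vc: "v \<in> carrier (dihedral N)" using pv rc v_def by simp
    have vk: "fst v mod 2 = 1" "snd v" using conj_par[OF evN _ pv(1) rc] N2 v_def by auto
    define w where "w = u \<otimes>\<^bsub>dihedral N\<^esub> v"
    have wst: "graph_translate (dihedral N) F0 w = F0" using F0(5)[OF uc vc ust vst] w_def by simp
    have wc: "w \<in> carrier (dihedral N)" using uc vc w_def by simp
    have wk: "fst w mod 2 = 1" "\<not> snd w"
    proof -
      obtain i a where u: "u = (i,a)" by (cases u)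
      obtain j b where v: "v = (j,b)" by (cases v)
      have "j < N" using vc v by (simp add: dcarrier)
      then show "fst w mod 2 = 1" using par_mult[OF evN, of j i a b] u v uk vk w_def by simp presburger
      show "\<not> snd w" using u v uk vk w_def by (simp add: dmult)
    qed
    define o1 where "o1 = ((0::nat),False)"
    define zz where "zz = (m, False)"
    have oneS: "o1 \<in> ?S" using F0(2) m0 o1_def by (simp add: d_one dcarrier)
    have zS': "zz \<in> ?S" using zS zz_def by simp
    have sub: "{o1, zz, u, v, w} \<subseteq> ?S"
      using oneS zS' F0(4) uc vc wc ust vst wst by auto
    have ok: "fst o1 mod 2 = 0" "\<not> snd o1" "fst zz mod 2 = 0" "\<not> snd zz" using o1_def zz_def evm by auto
    have "o1 \<noteq> zz" using m0 o1_def zz_def by simp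
    moreover have "zz \<noteq> u" "zz \<noteq> v" "zz \<noteq> w" "o1 \<noteq> u" "o1 \<noteq> v" "o1 \<noteq> w" "u \<noteq> v" "u \<noteq> w" "v \<noteq> w"
      by (intro neq_by_key; use uk vk wk ok in simp)+
    ultimately have "card {o1, zz, u, v, w} = 5" by simp
    moreover have "card {o1, zz, u, v, w} \<le> card ?S" using sub fin by (intro card_mono) auto
    ultimately show False using F0(3) by simp
  qed
qed




definition wv :: "nat \<Rightarrow> nat \<times> bool \<Rightarrow> int" where "wv m x = (eps (snd x) * int (fst x)) mod int m"


lemma odd_dvd2: assumes "odd m" "int m dvd 2 * x" shows "int m dvd x"
proof -
  have "even (m + 1)" using assms(1) by simp
  then obtain h where h: "m + 1 = 2 * h" by (rule evenE)
  have "int m dvd int h * (2 * x)" using assms(2) by simp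
  moreover have "int h * (2 * x) = (int m + 1) * x"
  proof -
    have "int m + 1 = 2 * int h" using h by linarith
    then show ?thesis by (simp add: algebra_simps)
  qed
  ultimately have "int m dvd (int m + 1) * x" by simp
  then have "int m dvd int m * x + x" by (simp add: algebra_simps)
  then show ?thesis by (simp add: dvd_add_right_iff)
qed

lemma odd_cancel2: assumes "odd m" "(2 * a) mod int m = (2 * b) mod int m" shows "a mod int m = b mod int m"
proof -
  have "int m dvd 2 * a - 2 * b" using assms(2) by (simp only: mod_eq_dvd_iff)
  then have "int m dvd 2 * (a - b)" by (simp only: right_diff_distrib)
  then have "int m dvd a - b" by (rule odd_dvd2[OF assms(1)])
  then show ?thesis by (simp only: mod_eq_dvd_iff)
qed

lemma wv_range: "0 < m \<Longrightarrow> 0 \<le> wv m x \<and> wv m x < int m" by (simp add: wv_def)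

lemma wv_mult:
  assumes N: "N = 2 * m" and x: "x \<in> carrier (dihedral N)" and g: "g \<in> carrier (dihedral N)"
  shows "wv m (x \<otimes>\<^bsub>dihedral N\<^esub> g) = (eps (snd g) * wv m x + wv m g) mod int m"
proof -
  obtain i a where xi: "x = (i,a)" by (cases x)
  obtain t c where gt: "g = (t,c)" by (cases g)
  have t: "t < N" using g gt by (simp add: dcarrier)
  let ?X = "int i + eps a * int t"
  have f: "int (fst (x \<otimes>\<^bsub>dihedral N\<^esub> g)) = ?X mod int N" using fst_mult_eps[OF t] xi gt by simp
  have sn: "snd (x \<otimes>\<^bsub>dihedral N\<^esub> g) = (a \<noteq> c)" using xi gt by (simp add: dmult)
  have d1: "int m dvd ?X mod int N - ?X"
  proof -
    have "int N dvd ?X - ?X mod int N" by (rule dvd_minus_mod)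
    then have "int m dvd ?X - ?X mod int N" using N by (metis dvd_mult_right of_nat_mult)
    then show ?thesis by (metis dvd_minus_iff minus_diff_eq)
  qed
  have d2: "int m dvd eps c * (eps a * int i) - eps c * ((eps a * int i) mod int m)"
    by (metis dvd_minus_mod right_diff_distrib dvd_mult)
  have d3: "int m dvd eps c * int t - (eps c * int t) mod int m" by (rule dvd_minus_mod)
  have eq: "eps a * eps c * ?X = eps c * (eps a * int i) + eps c * int t"
    using eps_sq[of a] by (simp add: algebra_simps)
  have "int m dvd eps a * eps c * (?X mod int N) - (eps c * ((eps a * int i) mod int m) + (eps c * int t) mod int m)"
  proof -
    define XN where "XN = ?X mod int N"
    define X where "X = ?X"
    define P where "P = eps a * int i"
    define T where "T = eps c * int t"
    define Pm where "Pm = P mod int m"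
    define Tm where "Tm = T mod int m"
    define k where "k = eps a * eps c"
    have e0: "k * X - eps c * P - T = 0" using eq unfolding k_def X_def P_def T_def by simp
    have "k * XN - (eps c * Pm + Tm) = k * (XN - X) + (eps c * P - eps c * Pm) + (T - Tm) + (k * X - eps c * P - T)"
      by (simp add: algebra_simps)
    also have "\<dots> = k * (XN - X) + (eps c * P - eps c * Pm) + (T - Tm)" using e0 by simp
    finally have "k * XN - (eps c * Pm + Tm) = k * (XN - X) + (eps c * P - eps c * Pm) + (T - Tm)" .
    moreover have "int m dvd k * (XN - X) + (eps c * P - eps c * Pm) + (T - Tm)"
      using d1 d2 d3 unfolding XN_def X_def P_def Pm_def T_def Tm_def by (intro dvd_add dvd_mult) auto
    ultimately have "int m dvd k * XN - (eps c * Pm + Tm)" by (simp only:)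
    then show ?thesis unfolding XN_def X_def P_def Pm_def T_def Tm_def k_def .
  qed
  then have "(eps a * eps c * (?X mod int N)) mod int m = (eps c * ((eps a * int i) mod int m) + (eps c * int t) mod int m) mod int m"
    by (simp add: mod_eq_dvd_iff)
  moreover have "wv m (x \<otimes>\<^bsub>dihedral N\<^esub> g) = (eps a * eps c * (?X mod int N)) mod int m"
    unfolding wv_def by (simp only: f sn eps_ne)
  moreover have "eps (snd g) * wv m x + wv m g = eps c * ((eps a * int i) mod int m) + (eps c * int t) mod int m"
    unfolding wv_def by (simp only: xi gt fst_conv snd_conv)
  ultimately show ?thesis by (simp only:)
qed


lemma mod_two_sol: fixes i m k :: nat assumes "i < 2 * m" "k < m" shows "i mod m = k \<longleftrightarrow> i = k \<or> i = k + m"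
proof (cases "i < m")
  case True
  then have "i mod m = i" by simp
  then show ?thesis using True assms by auto
next
  case False
  then have "i mod m = (i - m) mod m" by (simp add: le_mod_geq)
  also have "\<dots> = i - m" using False assms(1) by simp
  finally show ?thesis using False assms by auto
qed

lemma wv_F: assumes "0 \<le> a" shows "wv m (i, False) = a \<longleftrightarrow> i mod m = nat a"
proof -
  have "wv m (i, False) = int (i mod m)" by (simp add: wv_def eps_def zmod_int)
  then show ?thesis using assms by auto
qed

lemma wv_T: assumes "0 < m" "0 \<le> a" "a < int m" shows "wv m (i, True) = a \<longleftrightarrow> i mod m = nat ((-a) mod int m)"
proof -
  have w: "wv m (i, True) = (- int i) mod int m" by (simp add: wv_def eps_def)
  have am: "a mod int m = a" using assms by simp
  have "(- int i) mod int m = a \<longleftrightarrow> (- int i) mod int m = a mod int m" using am by simp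
  also have "\<dots> \<longleftrightarrow> int m dvd (- int i) - a" by (rule mod_eq_dvd_iff)
  also have "\<dots> \<longleftrightarrow> int m dvd int i - (- a)"
    by (metis dvd_minus_iff minus_diff_eq diff_minus_eq_add add.commute diff_conv_add_uminus)
  also have "\<dots> \<longleftrightarrow> int i mod int m = (- a) mod int m" by (rule mod_eq_dvd_iff[symmetric])
  also have "\<dots> \<longleftrightarrow> int (i mod m) = (- a) mod int m" by (simp add: zmod_int)
  also have "\<dots> \<longleftrightarrow> i mod m = nat ((- a) mod int m)" using assms(1) by auto
  finally show ?thesis using w by simp
qed

lemma W1:
  assumes N: "N = 2 * m" and m: "0 < m" and a: "0 \<le> a" "a < int m"
  shows "card {y \<in> carrier (dihedral N). wv m y = a} = 4"
proof -
  define k1 where "k1 = nat a"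
  define k2 where "k2 = nat ((-a) mod int m)"
  have k1: "k1 < m" using a k1_def by simp
  have k2: "k2 < m" using m k2_def by (simp add: nat_less_iff)
  have eq: "{y \<in> carrier (dihedral N). wv m y = a} = {(k1,False), (k1+m,False), (k2,True), (k2+m,True)}"
  proof (rule Set.set_eqI)
    fix y :: "nat \<times> bool"
    obtain i b where y: "y = (i,b)" by (cases y)
    show "y \<in> {y \<in> carrier (dihedral N). wv m y = a} \<longleftrightarrow> y \<in> {(k1,False), (k1+m,False), (k2,True), (k2+m,True)}"
    proof (cases b)
      case True
      have "y \<in> {y \<in> carrier (dihedral N). wv m y = a} \<longleftrightarrow> i < 2 * m \<and> i mod m = k2"
        using y True wv_T[OF m a] N k2_def by (simp add: dcarrier)
      also have "\<dots> \<longleftrightarrow> i = k2 \<or> i = k2 + m" using mod_two_sol[OF _ k2] k2 by auto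
      finally show ?thesis using y True by auto
    next
      case False
      have "y \<in> {y \<in> carrier (dihedral N). wv m y = a} \<longleftrightarrow> i < 2 * m \<and> i mod m = k1"
        using y False wv_F[OF a(1)] N k1_def by (simp add: dcarrier)
      also have "\<dots> \<longleftrightarrow> i = k1 \<or> i = k1 + m" using mod_two_sol[OF _ k1] k1 by auto
      finally show ?thesis using y False by auto
    qed
  qed
  show ?thesis unfolding eq using m by simp
qed

lemma edge_other: "e \<in> complete_edges V \<Longrightarrow> a \<in> e \<Longrightarrow> \<exists>u\<in>V. u \<noteq> a \<and> e = {a,u}"
  unfolding complete_edges_def by auto

definition Fac :: "nat \<Rightarrow> nat \<Rightarrow> int \<Rightarrow> (nat \<times> bool) option set set" where
  "Fac N m c = {e \<in> complete_edges (Gbar (dihedral N)).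
     (\<exists>x. e = {None, Some x} \<and> wv m x = c) \<or>
     (\<exists>x y. e = {Some x, Some y} \<and> (wv m x + wv m y) mod int m = (2 * c) mod int m)}"

lemma Fac_sub: "Fac N m c \<subseteq> complete_edges (Gbar (dihedral N))" by (auto simp: Fac_def)

lemma Fac_None: "{None, Some x} \<in> Fac N m c \<longleftrightarrow> x \<in> carrier (dihedral N) \<and> wv m x = c"
proof
  assume h: "{None, Some x} \<in> Fac N m c"
  then have "x \<in> carrier (dihedral N)" by (auto simp: Fac_def ce_iff Gbar_def)
  moreover have "wv m x = c" using h by (auto simp: Fac_def doubleton_eq_iff)
  ultimately show "x \<in> carrier (dihedral N) \<and> wv m x = c" by simp
next
  assume h: "x \<in> carrier (dihedral N) \<and> wv m x = c"
  then have "{None, Some x} \<in> complete_edges (Gbar (dihedral N))" by (simp add: ce_iff Gbar_def)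
  then show "{None, Some x} \<in> Fac N m c" unfolding Fac_def using h by blast
qed

lemma Fac_Some: "{Some x, Some y} \<in> Fac N m c \<longleftrightarrow> x \<in> carrier (dihedral N) \<and> y \<in> carrier (dihedral N) \<and> x \<noteq> y
   \<and> (wv m x + wv m y) mod int m = (2 * c) mod int m"
proof
  assume h: "{Some x, Some y} \<in> Fac N m c"
  then have 1: "x \<in> carrier (dihedral N) \<and> y \<in> carrier (dihedral N) \<and> x \<noteq> y" by (auto simp: Fac_def ce_iff Gbar_def)
  from h obtain x' y' where e: "{Some x, Some y} = {Some x', Some y'}" "(wv m x' + wv m y') mod int m = (2 * c) mod int m"
    by (auto simp: Fac_def doubleton_eq_iff)
  then have "(x = x' \<and> y = y') \<or> (x = y' \<and> y = x')" by (auto simp: doubleton_eq_iff)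
  then have "wv m x + wv m y = wv m x' + wv m y'" by auto
  then show "x \<in> carrier (dihedral N) \<and> y \<in> carrier (dihedral N) \<and> x \<noteq> y \<and> (wv m x + wv m y) mod int m = (2 * c) mod int m"
    using 1 e(2) by simp
next
  assume h: "x \<in> carrier (dihedral N) \<and> y \<in> carrier (dihedral N) \<and> x \<noteq> y \<and> (wv m x + wv m y) mod int m = (2 * c) mod int m"
  then have "{Some x, Some y} \<in> complete_edges (Gbar (dihedral N))" by (simp add: ce_iff Gbar_def)
  then show "{Some x, Some y} \<in> Fac N m c" unfolding Fac_def using h by blast
qed

lemma edge_cases:
  assumes "e \<in> complete_edges (Gbar G)"
  shows "(\<exists>x\<in>carrier G. e = {None, Some x}) \<or> (\<exists>x\<in>carrier G. \<exists>y\<in>carrier G. x \<noteq> y \<and> e = {Some x, Some y})"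
proof -
  obtain u v where uv: "e = {u,v}" "u \<in> Gbar G" "v \<in> Gbar G" "u \<noteq> v" using assms by (rule ce_elim)
  show ?thesis
  proof (cases u)
    case None
    then obtain x where "v = Some x" "x \<in> carrier G" using uv by (auto simp: Gbar_def)
    then show ?thesis using uv None by auto
  next
    case (Some x)
    show ?thesis
    proof (cases v)
      case None
      then show ?thesis using uv Some by (auto simp: Gbar_def insert_commute)
    next
      case (Some y)
      then show ?thesis using uv \<open>u = Some x\<close> by (auto simp: Gbar_def)
    qed
  qed
qed


lemma sumcond:
  fixes wx wy c :: int
  assumes "0 \<le> wy" "wy < int m"
  shows "(wx + wy) mod int m = (2 * c) mod int m \<longleftrightarrow> wy = (2 * c - wx) mod int m"
proof -
  have "(wx + wy) mod int m = (2 * c) mod int m \<longleftrightarrow> int m dvd (wx + wy) - 2 * c" by (rule mod_eq_dvd_iff)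
  also have "(wx + wy) - 2 * c = wy - (2 * c - wx)" by simp
  also have "int m dvd wy - (2 * c - wx) \<longleftrightarrow> wy mod int m = (2 * c - wx) mod int m" by (rule mod_eq_dvd_iff[symmetric])
  also have "wy mod int m = wy" using assms by simp
  finally show ?thesis by simp
qed

lemma selfcond:
  fixes wx c :: int
  assumes "odd m" "0 \<le> wx" "wx < int m" "0 \<le> c" "c < int m"
  shows "wx = (2 * c - wx) mod int m \<longleftrightarrow> wx = c"
proof -
  have "wx = (2 * c - wx) mod int m \<longleftrightarrow> (wx + wx) mod int m = (2 * c) mod int m"
    using sumcond[of wx m wx c] assms by simp
  also have "\<dots> \<longleftrightarrow> (2 * wx) mod int m = (2 * c) mod int m" by (simp only: mult_2)
  also have "\<dots> \<longleftrightarrow> wx mod int m = c mod int m"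
  proof
    assume "(2 * wx) mod int m = (2 * c) mod int m" then show "wx mod int m = c mod int m" by (rule odd_cancel2[OF assms(1)])
  next
    assume "wx mod int m = c mod int m" then show "(2 * wx) mod int m = (2 * c) mod int m" by (metis mod_mult_right_eq)
  qed
  also have "\<dots> \<longleftrightarrow> wx = c" using assms by simp
  finally show ?thesis .
qed

lemma eps_dvd: "int m dvd eps s * z \<longleftrightarrow> int m dvd z"
proof
  assume "int m dvd eps s * z"
  then have "int m dvd eps s * (eps s * z)" by (rule dvd_mult)
  then show "int m dvd z" by (simp only: mult.assoc[symmetric] eps_sq mult_1)
next
  assume "int m dvd z" then show "int m dvd eps s * z" by (rule dvd_mult)
qed

lemma alpha_inj:
  fixes a b G :: int
  assumes "0 \<le> a" "a < int m" "0 \<le> b" "b < int m" "(eps s * a + G) mod int m = (eps s * b + G) mod int m"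
  shows "a = b"
proof -
  have "int m dvd (eps s * a + G) - (eps s * b + G)" using assms(5) by (simp only: mod_eq_dvd_iff)
  also have "(eps s * a + G) - (eps s * b + G) = eps s * (a - b)" by (simp add: algebra_simps)
  finally have "int m dvd a - b" by (simp only: eps_dvd)
  then have "a mod int m = b mod int m" by (simp only: mod_eq_dvd_iff)
  then show ?thesis using assms by simp
qed

lemma pair_cong:
  fixes wx wy c G :: int
  shows "((eps s * wx + G) mod int m + (eps s * wy + G) mod int m) mod int m = (2 * ((eps s * c + G) mod int m)) mod int m
     \<longleftrightarrow> (wx + wy) mod int m = (2 * c) mod int m"
proof -
  have "((eps s * wx + G) mod int m + (eps s * wy + G) mod int m) mod int m = ((eps s * wx + G) + (eps s * wy + G)) mod int m"
    by (rule mod_add_eq)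
  moreover have "(2 * ((eps s * c + G) mod int m)) mod int m = (2 * (eps s * c + G)) mod int m"
    by (rule mod_mult_right_eq)
  moreover have "((eps s * wx + G) + (eps s * wy + G)) mod int m = (2 * (eps s * c + G)) mod int m
      \<longleftrightarrow> int m dvd ((eps s * wx + G) + (eps s * wy + G)) - (2 * (eps s * c + G))" by (rule mod_eq_dvd_iff)
  moreover have "((eps s * wx + G) + (eps s * wy + G)) - (2 * (eps s * c + G)) = eps s * ((wx + wy) - 2 * c)"
    by (simp add: algebra_simps)
  moreover have "(wx + wy) mod int m = (2 * c) mod int m \<longleftrightarrow> int m dvd (wx + wy) - 2 * c" by (rule mod_eq_dvd_iff)
  ultimately show ?thesis by (simp only: eps_dvd)
qed

lemma Fac_deg:
  assumes N: "N = 2 * m" and odd: "odd m" and c: "0 \<le> c" "c < int m" and v: "v \<in> Gbar (dihedral N)"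
  shows "card {e \<in> Fac N m c. v \<in> e} = 4"
proof -
  have m: "0 < m" using odd by (rule odd_pos)
  show ?thesis
  proof (cases v)
    case None
    have eq: "{e \<in> Fac N m c. v \<in> e} = (\<lambda>x. {None, Some x}) ` {x \<in> carrier (dihedral N). wv m x = c}"
    proof (rule Set.set_eqI, rule iffI)
      fix e assume h: "e \<in> {e \<in> Fac N m c. v \<in> e}"
      have e1: "e \<in> Fac N m c" using h by blast
      have e2: "None \<in> e" using h None by blast
      have ec: "e \<in> complete_edges (Gbar (dihedral N))" using Fac_sub e1 by (rule subsetD)
      obtain u where u: "u \<in> Gbar (dihedral N)" "u \<noteq> None" "e = {None, u}" using edge_other[OF ec e2] by blast
      obtain x where x: "u = Some x" using u(2) by (cases u) auto
      have ex: "e = {None, Some x}" using u(3) x by simp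
      have "{None, Some x} \<in> Fac N m c" using e1 ex by simp
      then have "x \<in> carrier (dihedral N) \<and> wv m x = c" by (simp only: Fac_None)
      then show "e \<in> (\<lambda>x. {None, Some x}) ` {x \<in> carrier (dihedral N). wv m x = c}"
        using ex by blast
    next
      fix e assume "e \<in> (\<lambda>x. {None, Some x}) ` {x \<in> carrier (dihedral N). wv m x = c}"
      then obtain x where x: "x \<in> carrier (dihedral N)" "wv m x = c" "e = {None, Some x}" by blast
      then have "e \<in> Fac N m c" using Fac_None[of x N m c] by simp
      then show "e \<in> {e \<in> Fac N m c. v \<in> e}" using None x(3) by simp
    qed
    have "inj_on (\<lambda>x. {None, Some x}) {x \<in> carrier (dihedral N). wv m x = c}"
      by (auto simp: inj_on_def doubleton_eq_iff)
    then show ?thesis using eq W1[OF N m c] by (simp add: card_image)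
  next
    case (Some x)
    have xc: "x \<in> carrier (dihedral N)" using v Some by (auto simp: Gbar_def)
    define b where "b = (2 * c - wv m x) mod int m"
    define B where "B = {y \<in> carrier (dihedral N). wv m y = b}"
    have b: "0 \<le> b" "b < int m" using m b_def by auto
    have cB: "card B = 4" using W1[OF N m b] B_def by simp
    then have finB: "finite B" by (metis card.infinite zero_neq_numeral)
    have wr: "\<And>y. 0 \<le> wv m y \<and> wv m y < int m" using wv_range[OF m] by blast
    have memS: "{Some x, Some y} \<in> Fac N m c \<longleftrightarrow> y \<in> B \<and> y \<noteq> x" for y
    proof -
      have "{Some x, Some y} \<in> Fac N m c \<longleftrightarrow> y \<in> carrier (dihedral N) \<and> x \<noteq> y \<and> (wv m x + wv m y) mod int m = (2 * c) mod int m"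
        using Fac_Some[of x y N m c] xc by blast
      moreover have "(wv m x + wv m y) mod int m = (2 * c) mod int m \<longleftrightarrow> wv m y = b"
        unfolding b_def using sumcond[of "wv m y" m "wv m x" c] wr[of y] by blast
      moreover have "y \<in> B \<longleftrightarrow> y \<in> carrier (dihedral N) \<and> wv m y = b" unfolding B_def by blast
      ultimately show ?thesis by blast
    qed
    have memN: "{Some x, None} \<in> Fac N m c \<longleftrightarrow> wv m x = c"
    proof -
      have "{Some x, None} = {None, Some x}" by blast
      then show ?thesis using Fac_None[of x N m c] xc by simp
    qed
    have xB: "x \<in> B \<longleftrightarrow> wv m x = c"
    proof -
      have "x \<in> B \<longleftrightarrow> wv m x = b" unfolding B_def using xc by blast
      also have "\<dots> \<longleftrightarrow> wv m x = c" unfolding b_def using selfcond[OF odd _ _ c, of "wv m x"] wr[of x] by blast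
      finally show ?thesis .
    qed
    define A where "A = {u \<in> Gbar (dihedral N). u \<noteq> Some x \<and> {Some x, u} \<in> Fac N m c}"
    have eqA: "{e \<in> Fac N m c. v \<in> e} = (\<lambda>u. {Some x, u}) ` A"
    proof (rule Set.set_eqI, rule iffI)
      fix e assume h: "e \<in> {e \<in> Fac N m c. v \<in> e}"
      have e1: "e \<in> Fac N m c" using h by blast
      have e2: "Some x \<in> e" using h Some by blast
      have ec: "e \<in> complete_edges (Gbar (dihedral N))" using Fac_sub e1 by (rule subsetD)
      obtain u where u: "u \<in> Gbar (dihedral N)" "u \<noteq> Some x" "e = {Some x, u}" using edge_other[OF ec e2] by blast
      have "u \<in> A" unfolding A_def using u e1 by blast
      then show "e \<in> (\<lambda>u. {Some x, u}) ` A" using u(3) by blast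
    next
      fix e assume "e \<in> (\<lambda>u. {Some x, u}) ` A"
      then obtain u where u: "u \<in> A" "e = {Some x, u}" by blast
      then have "e \<in> Fac N m c" unfolding A_def by blast
      moreover have "v \<in> e" using u(2) Some by blast
      ultimately show "e \<in> {e \<in> Fac N m c. v \<in> e}" by blast
    qed
    have inj: "inj_on (\<lambda>u. {Some x, u}) A"
    proof (rule inj_onI)
      fix u u' assume "u \<in> A" "u' \<in> A" "{Some x, u} = {Some x, u'}"
      then show "u = u'" unfolding A_def by (auto simp: doubleton_eq_iff)
    qed
    have A_eq: "A = (if wv m x = c then insert None (Some ` (B - {x})) else Some ` (B - {x}))"
    proof (rule Set.set_eqI)
      fix u show "u \<in> A \<longleftrightarrow> u \<in> (if wv m x = c then insert None (Some ` (B - {x})) else Some ` (B - {x}))"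
      proof (cases u)
        case None
        have "None \<in> A \<longleftrightarrow> wv m x = c" unfolding A_def using memN by (simp add: Gbar_def)
        moreover have "None \<notin> Some ` (B - {x})" by blast
        ultimately show ?thesis using None by simp
      next
        case (Some y)
        have "Some y \<in> A \<longleftrightarrow> y \<in> B \<and> y \<noteq> x"
        proof -
          have "Some y \<in> A \<longleftrightarrow> Some y \<in> Gbar (dihedral N) \<and> y \<noteq> x \<and> {Some x, Some y} \<in> Fac N m c"
            unfolding A_def by blast
          also have "\<dots> \<longleftrightarrow> y \<in> B \<and> y \<noteq> x" using memS[of y] B_def by (auto simp: Gbar_def)
          finally show ?thesis .
        qed
        moreover have "Some y \<in> Some ` (B - {x}) \<longleftrightarrow> y \<in> B \<and> y \<noteq> x" by blast
        ultimately show ?thesis using Some by simp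
      qed
    qed
    have cardA: "card A = 4"
    proof (cases "wv m x = c")
      case True
      then have "x \<in> B" using xB by simp
      then have c3: "card (B - {x}) = 3" using cB finB by simp
      have "card (insert None (Some ` (B - {x}))) = Suc (card (Some ` (B - {x})))"
        using finB by (intro card_insert_disjoint) auto
      moreover have "card (Some ` (B - {x})) = card (B - {x})" by (rule card_image) simp
      moreover have "A = insert None (Some ` (B - {x}))" using A_eq True by simp
      ultimately show ?thesis using c3 by simp
    next
      case False
      then have "B - {x} = B" using xB by blast
      moreover have "card (Some ` B) = card B" by (rule card_image) simp
      moreover have "A = Some ` (B - {x})" using A_eq False by simp
      ultimately show ?thesis using cB by simp
    qed
    have "card {e \<in> Fac N m c. v \<in> e} = card ((\<lambda>u. {Some x, u}) ` A)" using eqA by simp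
    also have "\<dots> = card A" using inj by (rule card_image)
    finally show ?thesis using cardA by simp
  qed
qed


lemma Fac_trans:
  assumes N: "N = 2 * m" and odd: "odd m" and c: "0 \<le> c" "c < int m" and g: "g \<in> carrier (dihedral N)"
  shows "graph_translate (dihedral N) (Fac N m c) g = Fac N m ((eps (snd g) * c + wv m g) mod int m)"
proof -
  have m: "0 < m" using odd by (rule odd_pos)
  interpret group "dihedral N" using dgroup N m by simp
  define s where "s = snd g"
  define G where "G = wv m g"
  define c' where "c' = (eps s * c + G) mod int m"
  have wm: "wv m (x \<otimes>\<^bsub>dihedral N\<^esub> g) = (eps s * wv m x + G) mod int m" if "x \<in> carrier (dihedral N)" for x
    using wv_mult[OF N that g] s_def G_def by simp
  have wr: "\<And>y. 0 \<le> wv m y \<and> wv m y < int m" using wv_range[OF m] by blast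
  have "graph_translate (dihedral N) (Fac N m c) g = Fac N m c'"
  proof (rule Set.set_eqI, rule iffI)
    fix e' assume "e' \<in> graph_translate (dihedral N) (Fac N m c) g"
    then obtain e where e: "e \<in> Fac N m c" "e' = ract (dihedral N) g ` e" unfolding graph_translate_def by blast
    have ec: "e \<in> complete_edges (Gbar (dihedral N))" using Fac_sub e(1) by (rule subsetD)
    from edge_cases[OF ec] show "e' \<in> Fac N m c'"
    proof (elim disjE bexE conjE)
      fix x assume x: "x \<in> carrier (dihedral N)" "e = {None, Some x}"
      have "{None, Some x} \<in> Fac N m c" using e(1) x(2) by simp
      then have wx: "wv m x = c" by (simp only: Fac_None)
      have e': "e' = {None, Some (x \<otimes>\<^bsub>dihedral N\<^esub> g)}" using e(2) x(2) by simp
      have xg: "x \<otimes>\<^bsub>dihedral N\<^esub> g \<in> carrier (dihedral N)" using x(1) g by (rule m_closed)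
      have "wv m (x \<otimes>\<^bsub>dihedral N\<^esub> g) = c'" using wm[OF x(1)] wx c'_def by simp
      then have "{None, Some (x \<otimes>\<^bsub>dihedral N\<^esub> g)} \<in> Fac N m c'" using xg by (simp only: Fac_None)
      then show "e' \<in> Fac N m c'" using e' by simp
    next
      fix x y assume xy: "x \<in> carrier (dihedral N)" "y \<in> carrier (dihedral N)" "x \<noteq> y" "e = {Some x, Some y}"
      have "{Some x, Some y} \<in> Fac N m c" using e(1) xy(4) by simp
      then have h: "(wv m x + wv m y) mod int m = (2 * c) mod int m" by (simp only: Fac_Some)
      have e': "e' = {Some (x \<otimes>\<^bsub>dihedral N\<^esub> g), Some (y \<otimes>\<^bsub>dihedral N\<^esub> g)}" using e(2) xy(4) by simp
      have xg: "x \<otimes>\<^bsub>dihedral N\<^esub> g \<in> carrier (dihedral N)" using xy(1) g by (rule m_closed)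
      have yg: "y \<otimes>\<^bsub>dihedral N\<^esub> g \<in> carrier (dihedral N)" using xy(2) g by (rule m_closed)
      have ne: "x \<otimes>\<^bsub>dihedral N\<^esub> g \<noteq> y \<otimes>\<^bsub>dihedral N\<^esub> g" using xy(1,2,3) g by simp
      have "(wv m (x \<otimes>\<^bsub>dihedral N\<^esub> g) + wv m (y \<otimes>\<^bsub>dihedral N\<^esub> g)) mod int m = (2 * c') mod int m"
        unfolding wm[OF xy(1)] wm[OF xy(2)] c'_def using h pair_cong[of s "wv m x" G m "wv m y" c] by simp
      then have "{Some (x \<otimes>\<^bsub>dihedral N\<^esub> g), Some (y \<otimes>\<^bsub>dihedral N\<^esub> g)} \<in> Fac N m c'" unfolding Fac_Some using xg yg ne by blast
      then show "e' \<in> Fac N m c'" using e' by simp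
    qed
  next
    fix e' assume e'F: "e' \<in> Fac N m c'"
    have ec: "e' \<in> complete_edges (Gbar (dihedral N))" using Fac_sub e'F by (rule subsetD)
    from edge_cases[OF ec] show "e' \<in> graph_translate (dihedral N) (Fac N m c) g"
    proof (elim disjE bexE conjE)
      fix x' assume x': "x' \<in> carrier (dihedral N)" "e' = {None, Some x'}"
      have "{None, Some x'} \<in> Fac N m c'" using e'F x'(2) by simp
      then have wx': "wv m x' = c'" by (simp only: Fac_None)
      define x where "x = x' \<otimes>\<^bsub>dihedral N\<^esub> inv\<^bsub>dihedral N\<^esub> g"
      have xc: "x \<in> carrier (dihedral N)" using x' g x_def by simp
      have xg: "x \<otimes>\<^bsub>dihedral N\<^esub> g = x'" using x' g x_def by (simp add: m_assoc)
      have "(eps s * wv m x + G) mod int m = (eps s * c + G) mod int m" using wm[OF xc] xg wx' c'_def by simp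
      then have wx: "wv m x = c" using alpha_inj[of "wv m x" m c s G] wr[of x] c by blast
      have "{None, Some x} \<in> Fac N m c" using xc wx by (simp only: Fac_None)
      moreover have "ract (dihedral N) g ` {None, Some x} = e'" using xg x'(2) by simp
      ultimately show "e' \<in> graph_translate (dihedral N) (Fac N m c) g" unfolding graph_translate_def by blast
    next
      fix x' y' assume xy': "x' \<in> carrier (dihedral N)" "y' \<in> carrier (dihedral N)" "x' \<noteq> y'" "e' = {Some x', Some y'}"
      have "{Some x', Some y'} \<in> Fac N m c'" using e'F xy'(4) by simp
      then have h: "(wv m x' + wv m y') mod int m = (2 * c') mod int m" by (simp only: Fac_Some)
      define x where "x = x' \<otimes>\<^bsub>dihedral N\<^esub> inv\<^bsub>dihedral N\<^esub> g"
      define y where "y = y' \<otimes>\<^bsub>dihedral N\<^esub> inv\<^bsub>dihedral N\<^esub> g"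
      have xc: "x \<in> carrier (dihedral N)" using xy' g x_def by simp
      have yc: "y \<in> carrier (dihedral N)" using xy' g y_def by simp
      have xg: "x \<otimes>\<^bsub>dihedral N\<^esub> g = x'" using xy' g x_def by (simp add: m_assoc)
      have yg: "y \<otimes>\<^bsub>dihedral N\<^esub> g = y'" using xy' g y_def by (simp add: m_assoc)
      have ne: "x \<noteq> y" using xg yg xy'(3) by blast
      have "((eps s * wv m x + G) mod int m + (eps s * wv m y + G) mod int m) mod int m = (2 * ((eps s * c + G) mod int m)) mod int m"
        using h wm[OF xc] wm[OF yc] xg yg c'_def by simp
      then have "(wv m x + wv m y) mod int m = (2 * c) mod int m" by (simp only: pair_cong)
      then have "{Some x, Some y} \<in> Fac N m c" unfolding Fac_Some using xc yc ne by blast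
      moreover have "ract (dihedral N) g ` {Some x, Some y} = e'" using xg yg xy'(4) by simp
      ultimately show "e' \<in> graph_translate (dihedral N) (Fac N m c) g" unfolding graph_translate_def by blast
    qed
  qed
  then show ?thesis using s_def G_def c'_def by simp
qed


lemma Fac_unique:
  assumes odd: "odd m" and c: "0 \<le> c" "c < int m" and c': "0 \<le> c'" "c' < int m"
    and e: "e \<in> Fac N m c" "e \<in> Fac N m c'"
  shows "c = c'"
proof -
  have ec: "e \<in> complete_edges (Gbar (dihedral N))" using Fac_sub e(1) by (rule subsetD)
  from edge_cases[OF ec] show ?thesis
  proof (elim disjE bexE conjE)
    fix x assume x: "x \<in> carrier (dihedral N)" "e = {None, Some x}"
    have "{None, Some x} \<in> Fac N m c" "{None, Some x} \<in> Fac N m c'" using e x(2) by simp_all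
    then have "wv m x = c" "wv m x = c'" by (simp_all only: Fac_None)
    then show ?thesis by simp
  next
    fix x y assume xy: "x \<in> carrier (dihedral N)" "y \<in> carrier (dihedral N)" "x \<noteq> y" "e = {Some x, Some y}"
    have "{Some x, Some y} \<in> Fac N m c" "{Some x, Some y} \<in> Fac N m c'" using e xy(4) by simp_all
    then have "(wv m x + wv m y) mod int m = (2 * c) mod int m" "(wv m x + wv m y) mod int m = (2 * c') mod int m"
      by (simp_all only: Fac_Some)
    then have "(2 * c) mod int m = (2 * c') mod int m" by simp
    then have "c mod int m = c' mod int m" by (rule odd_cancel2[OF odd])
    then show ?thesis using c c' by simp
  qed
qed

lemma Fac_exists:
  assumes odd: "odd m" and e: "e \<in> complete_edges (Gbar (dihedral N))"
  shows "\<exists>c. 0 \<le> c \<and> c < int m \<and> e \<in> Fac N m c"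
proof -
  have m: "0 < m" using odd by (rule odd_pos)
  have wr: "\<And>y. 0 \<le> wv m y \<and> wv m y < int m" using wv_range[OF m] by blast
  from edge_cases[OF e] show ?thesis
  proof (elim disjE bexE conjE)
    fix x assume x: "x \<in> carrier (dihedral N)" "e = {None, Some x}"
    have "{None, Some x} \<in> Fac N m (wv m x)" using x(1) by (simp only: Fac_None simp_thms)
    then show ?thesis using x(2) wr[of x] by blast
  next
    fix x y assume xy: "x \<in> carrier (dihedral N)" "y \<in> carrier (dihedral N)" "x \<noteq> y" "e = {Some x, Some y}"
    define S where "S = wv m x + wv m y"
    have "even (m + 1)" using odd by simp
    then obtain h where h: "m + 1 = 2 * h" by (rule evenE)
    define c where "c = (S * int h) mod int m"
    have "(2 * c) mod int m = (2 * (S * int h)) mod int m" unfolding c_def by (rule mod_mult_right_eq)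
    also have "2 * (S * int h) = S * int m + S"
    proof -
      have "2 * int h = int m + 1" using h by linarith
      then show ?thesis by (simp add: algebra_simps)
    qed
    also have "(S * int m + S) mod int m = S mod int m" by simp
    finally have cS: "S mod int m = (2 * c) mod int m" by simp
    have "{Some x, Some y} \<in> Fac N m c" unfolding Fac_Some using xy(1,2,3) cS S_def by blast
    moreover have "0 \<le> c \<and> c < int m" using m c_def by simp
    ultimately show ?thesis using xy(4) by blast
  qed
qed

lemma sufficiency:
  assumes N2: "N \<ge> 2" and N4: "N mod 4 = 2"
  shows "is_R (dihedral N) 4"
proof -
  define m where "m = N div 2"
  have N: "N = 2 * m" using N4 m_def by presburger
  have odd: "odd m" using N4 N by presburger
  have m: "0 < m" using odd by (rule odd_pos)
  define FF where "FF = Fac N m ` {0..<int m}"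
  have kf: "k_factorization (Gbar (dihedral N)) 4 FF"
    unfolding k_factorization_def
  proof (intro conjI ballI)
    fix F assume "F \<in> FF"
    then obtain c where c: "0 \<le> c" "c < int m" "F = Fac N m c" unfolding FF_def by auto
    show "k_factor (Gbar (dihedral N)) 4 F"
      unfolding k_factor_def using Fac_sub Fac_deg[OF N odd c(1,2)] c(3) by blast
  next
    fix e assume e: "e \<in> complete_edges (Gbar (dihedral N))"
    obtain c where c: "0 \<le> c" "c < int m" "e \<in> Fac N m c" using Fac_exists[OF odd e] by blast
    show "\<exists>!F. F \<in> FF \<and> e \<in> F"
    proof (rule ex1I[of _ "Fac N m c"])
      show "Fac N m c \<in> FF \<and> e \<in> Fac N m c" using c unfolding FF_def by auto
    next
      fix F assume F: "F \<in> FF \<and> e \<in> F"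
      then obtain c' where c': "0 \<le> c'" "c' < int m" "F = Fac N m c'" unfolding FF_def by auto
      have "c' = c" using Fac_unique[OF odd c'(1,2) c(1,2)] F c'(3) c(3) by blast
      then show "F = Fac N m c" using c'(3) by simp
    qed
  qed
  have rot: "\<forall>F\<in>FF. \<forall>g\<in>carrier (dihedral N). graph_translate (dihedral N) F g \<in> FF"
  proof (intro ballI)
    fix F g assume F: "F \<in> FF" and g: "g \<in> carrier (dihedral N)"
    then obtain c where c: "0 \<le> c" "c < int m" "F = Fac N m c" unfolding FF_def by auto
    have "graph_translate (dihedral N) F g = Fac N m ((eps (snd g) * c + wv m g) mod int m)"
      using Fac_trans[OF N odd c(1,2) g] c(3) by simp
    moreover have "(eps (snd g) * c + wv m g) mod int m \<in> {0..<int m}" using m by simp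
    ultimately show "graph_translate (dihedral N) F g \<in> FF" unfolding FF_def by simp
  qed
  show ?thesis unfolding is_R_def one_rotational_def using kf rot by blast
qed

theorem theorem3p1:
  fixes N :: nat
  assumes "N \<ge> 2"
  shows "is_R (dihedral N) 4 \<longleftrightarrow> N mod 4 = 2"
proof
  assume "is_R (dihedral N) 4"
  then obtain FF where "one_rotational (dihedral N) 4 FF" unfolding is_R_def by blast
  then show "N mod 4 = 2" using necessity assms by blast
next
  assume "N mod 4 = 2"
  then show "is_R (dihedral N) 4" using sufficiency assms by blast
qed

end
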